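(* Let $\|\cdot\|_{Lo}$ be the Lorentz norm on $\mathbb{R}^p$ ($p\ge2$), with allowed sets all $S\subset\{1,\dots,p\}$ containing $p$ and associated norms $\Omega^{S^c}$ as in the context. Fix $J\subset\{1,\dots,p\}$ and let $g$ be the gauge norm described in the context. Then $g(\beta)=\|\beta\|_1$ for all $\beta\in\mathbb{R}^p$.
   Context: The Lorentz cone is $\mathcal{A}:=\{a\in\mathbb{R}^p: a_j>0\ \forall j,\ a_p\ge\|(a_1,\dots,a_{p-1})\|_2\}$ and $\|\beta\|_{Lo}:=\inf_{a\in\mathcal{A}}\frac12\sum_{i=1}^p\big(\beta_i^2/a_i+a_i\big)$. For $S\ni p$, $\mathcal{A}_{S^c}:=\{(a_j)_{j\in S^c}:a\in\mathcal{A}\}$, $\Omega^{S^c}(\beta_{S^c}):=\inf_{a\in\mathcal{A}_{S^c}}\frac12\sum_{j\in S^c}\big(\beta_j^2/a_j+a_j\big)$, and $\Upsilon_S(\beta):=\|\beta_S\|_{Lo}+\Omega^{S^c}(\beta_{S^c})$, where $\beta_S$ has entries $\beta_j1\{j\in S\}$. Let $\beta_{f(J)}:=\beta_J-\beta_{J^{c}}$, $\mathrm{flip}_J(B):=\{\beta_{f(J)}:\beta\in B\}$, $\overline{B}:=\bigcup_{S\text{ allowed}}\{\beta:\Upsilon_S(\beta)\le1\}$, $B_g:=\mathrm{Conv}(\overline{B}\cup\mathrm{flip}_J(\overline{B}))$, and $g(x):=\inf\{t>0:x\in tB_g\}$. *)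

theory Defs
  imports "HOL-Analysis.Analysis"
begin

(* Vectors of R^p are represented as functions nat => real, indices 1..p, zero outside. *)
definition vecs :: "nat \<Rightarrow> (nat \<Rightarrow> real) set" where
  "vecs p = {\<beta>. \<forall>j. j \<notin> {1..p} \<longrightarrow> \<beta> j = 0}"

definition lorentz_cone :: "nat \<Rightarrow> (nat \<Rightarrow> real) set" where
  "lorentz_cone p = {a. (\<forall>j\<in>{1..p}. a j > 0) \<and> a p \<ge> sqrt (\<Sum>j=1..p-1. (a j)^2)}"

definition lo_norm :: "nat \<Rightarrow> (nat \<Rightarrow> real) \<Rightarrow> real" where
  "lo_norm p \<beta> = Inf ((\<lambda>a. (1/2) * (\<Sum>i=1..p. (\<beta> i)^2 / a i + a i)) ` lorentz_cone p)"

(* Omega^{S^c}: infimum over the projection A_{S^c} of the cone; written as an inf over a in A *)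
definition omega_comp :: "nat \<Rightarrow> nat set \<Rightarrow> (nat \<Rightarrow> real) \<Rightarrow> real" where
  "omega_comp p S \<beta> = Inf ((\<lambda>a. (1/2) * (\<Sum>j\<in>{1..p} - S. (\<beta> j)^2 / a j + a j)) ` lorentz_cone p)"

definition restr :: "nat set \<Rightarrow> (nat \<Rightarrow> real) \<Rightarrow> (nat \<Rightarrow> real)" where
  "restr S \<beta> = (\<lambda>j. if j \<in> S then \<beta> j else 0)"

definition upsilon :: "nat \<Rightarrow> nat set \<Rightarrow> (nat \<Rightarrow> real) \<Rightarrow> real" where
  "upsilon p S \<beta> = lo_norm p (restr S \<beta>) + omega_comp p S (restr ({1..p} - S) \<beta>)"

definition allowed :: "nat \<Rightarrow> nat set \<Rightarrow> bool" where
  "allowed p S \<longleftrightarrow> S \<subseteq> {1..p} \<and> p \<in> S"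

definition flip :: "nat \<Rightarrow> nat set \<Rightarrow> (nat \<Rightarrow> real) \<Rightarrow> (nat \<Rightarrow> real)" where
  "flip p J \<beta> = (\<lambda>j. restr J \<beta> j - restr ({1..p} - J) \<beta> j)"

definition Bbar :: "nat \<Rightarrow> (nat \<Rightarrow> real) set" where
  "Bbar p = (\<Union>S\<in>{S. allowed p S}. {\<beta>\<in>vecs p. upsilon p S \<beta> \<le> 1})"

definition fconvex :: "(nat \<Rightarrow> real) set \<Rightarrow> bool" where
  "fconvex C \<longleftrightarrow> (\<forall>x\<in>C. \<forall>y\<in>C. \<forall>u::real. 0 \<le> u \<and> u \<le> 1 \<longrightarrow>
      (\<lambda>j. u * x j + (1 - u) * y j) \<in> C)"

definition Bg :: "nat \<Rightarrow> nat set \<Rightarrow> (nat \<Rightarrow> real) set" where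
  "Bg p J = fconvex hull (Bbar p \<union> flip p J ` Bbar p)"

definition gauge_g :: "nat \<Rightarrow> nat set \<Rightarrow> (nat \<Rightarrow> real) \<Rightarrow> real" where
  "gauge_g p J x = Inf {t. t > 0 \<and> x \<in> (\<lambda>y j. t * y j) ` Bg p J}"

end

theory Submission
  imports Defs
begin

lemma cone_mem:
  assumes p: "p = Suc q" and Y: "\<And>j. j \<in> {1..q} \<Longrightarrow> Y j > 0" and X: "X > 0"
    and XY: "X \<ge> (\<Sum>j=1..q. Y j)"
  shows "(\<lambda>j. if j = p then X else Y j) \<in> lorentz_cone p"
proof -
  have s: "(\<Sum>j=1..p-1. ((\<lambda>j. if j = p then X else Y j) j)^2) = (\<Sum>j=1..q. (Y j)^2)"
    using p by (intro sum.cong) auto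
  have "sqrt (\<Sum>j=1..q. (Y j)^2) \<le> (\<Sum>j=1..q. Y j)"
    using L2_set_le_sum[of "{1..q}" Y] Y unfolding L2_set_def by force
  then show ?thesis unfolding lorentz_cone_def using s X Y p XY by auto
qed

lemma term_lb:
  fixes a b :: real assumes "a > 0" shows "\<bar>b\<bar> \<le> (1/2) * (b^2 / a + a)"
proof -
  have "0 \<le> (\<bar>b\<bar> - a)^2 / a" using assms by simp
  also have "(\<bar>b\<bar> - a)^2 / a = b^2/a + a - 2*\<bar>b\<bar>"
    using assms by (simp add: field_simps power2_eq_square)
  finally show ?thesis by simp
qed

lemma sum_lb:
  assumes "a \<in> lorentz_cone p" "A \<subseteq> {1..p}"
  shows "(\<Sum>j\<in>A. \<bar>\<gamma> j\<bar>) \<le> (1/2) * (\<Sum>j\<in>A. (\<gamma> j)^2 / a j + a j)"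
proof -
  have "(\<Sum>j\<in>A. \<bar>\<gamma> j\<bar>) \<le> (\<Sum>j\<in>A. (1/2) * ((\<gamma> j)^2 / a j + a j))"
    using assms by (intro sum_mono term_lb) (auto simp: lorentz_cone_def)
  then show ?thesis by (simp add: sum_distrib_left)
qed

lemma cone_ne: assumes "p \<ge> 1" shows "lorentz_cone p \<noteq> {}"
proof -
  obtain q where p: "p = Suc q" using assms by (cases p) auto
  have "(\<lambda>j. if j = p then real q + 1 else 1) \<in> lorentz_cone p"
    by (rule cone_mem[OF p]) auto
  then show ?thesis by blast
qed

lemma lo_lb: assumes "p \<ge> 1" shows "(\<Sum>j=1..p. \<bar>\<gamma> j\<bar>) \<le> lo_norm p \<gamma>"
  unfolding lo_norm_def using cone_ne[OF assms] sum_lb[of _ p "{1..p}" \<gamma>]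
  by (intro cInf_greatest) auto

lemma om_lb: assumes "p \<ge> 1" shows "(\<Sum>j\<in>{1..p}-S. \<bar>\<gamma> j\<bar>) \<le> omega_comp p S \<gamma>"
  unfolding omega_comp_def using cone_ne[OF assms] sum_lb[of _ p "{1..p}-S" \<gamma>]
  by (intro cInf_greatest) auto

lemma ups_lb: assumes "p \<ge> 1"
  shows "(\<Sum>j=1..p. \<bar>\<beta> j\<bar>) \<le> upsilon p S \<beta>"
proof -
  have a: "(\<Sum>j=1..p. \<bar>restr S \<beta> j\<bar>) = (\<Sum>j\<in>{1..p} \<inter> S. \<bar>\<beta> j\<bar>)"
    unfolding restr_def by (simp add: if_distrib sum.inter_restrict[symmetric] cong: if_cong)
  have b: "(\<Sum>j\<in>{1..p}-S. \<bar>restr ({1..p}-S) \<beta> j\<bar>) = (\<Sum>j\<in>{1..p} - S. \<bar>\<beta> j\<bar>)"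
    unfolding restr_def by (intro sum.cong) auto
  have "(\<Sum>j=1..p. \<bar>\<beta> j\<bar>) = (\<Sum>j\<in>{1..p} \<inter> S. \<bar>\<beta> j\<bar>) + (\<Sum>j\<in>{1..p} - S. \<bar>\<beta> j\<bar>)"
    by (rule sum.Int_Diff) simp
  then show ?thesis unfolding upsilon_def
    using lo_lb[OF assms, of "restr S \<beta>"] om_lb[OF assms, where S=S and \<gamma>="restr ({1..p}-S) \<beta>"] a b
    by linarith
qed


lemma frac_ub: fixes b c :: real assumes "c > 0" shows "b^2 / (\<bar>b\<bar> + c) \<le> \<bar>b\<bar>"
proof -
  have "b^2 \<le> \<bar>b\<bar> * (\<bar>b\<bar> + c)" using assms
    by (simp add: power2_eq_square algebra_simps)
  then show ?thesis using assms by (simp add: divide_le_eq)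
qed

lemma lo_ub: assumes p: "p = Suc q" and q: "q \<ge> 1"
  shows "lo_norm p (restr {p} y) \<le> \<bar>y p\<bar>"
proof (rule field_le_epsilon)
  fix e :: real assume e: "e > 0"
  define d where "d = e / real p"
  have d: "d > 0" using e p by (simp add: d_def)
  have pd: "real p * d = e" using p by (simp add: d_def)
  define a where "a = (\<lambda>j. if j = p then \<bar>y p\<bar> + real p * d else d)"
  have ac: "a \<in> lorentz_cone p" unfolding a_def
  proof (rule cone_mem[OF p])
    show "(\<Sum>j = 1..q. d) \<le> \<bar>y p\<bar> + real p * d" using d p by (simp add: algebra_simps)
  qed (use d p in \<open>auto simp: add_nonneg_pos\<close>)
  have s1: "(\<Sum>i=1..q. (restr {p} y i)^2 / a i + a i) = real q * d"
    using p by (simp add: restr_def a_def)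
  have "(\<Sum>i=1..p. (restr {p} y i)^2 / a i + a i)
      = (\<Sum>i=1..q. (restr {p} y i)^2 / a i + a i) + ((y p)^2 / (\<bar>y p\<bar> + real p * d) + (\<bar>y p\<bar> + real p * d))"
    using p by (simp add: restr_def a_def)
  also have "\<dots> \<le> real q * d + (\<bar>y p\<bar> + (\<bar>y p\<bar> + real p * d))"
    using s1 frac_ub[of "real p * d" "y p"] d p by simp
  finally have v: "(1/2) * (\<Sum>i=1..p. (restr {p} y i)^2 / a i + a i) \<le> \<bar>y p\<bar> + e"
    using pd p d by (simp add: algebra_simps)
  have "lo_norm p (restr {p} y) \<le> (1/2) * (\<Sum>i=1..p. (restr {p} y i)^2 / a i + a i)"
    unfolding lo_norm_def
  proof (rule cInf_lower)
    show "bdd_below ((\<lambda>a. 1 / 2 * (\<Sum>i = 1..p. (restr {p} y i)\<^sup>2 / a i + a i)) ` lorentz_cone p)"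
      using sum_lb[of _ p "{1..p}" "restr {p} y"] by (intro bdd_belowI2) auto
  qed (use ac in auto)
  with v show "lo_norm p (restr {p} y) \<le> \<bar>y p\<bar> + e" by linarith
qed

lemma om_ub: assumes p: "p = Suc q" and q: "q \<ge> 1"
  shows "omega_comp p {p} (restr ({1..p} - {p}) y) \<le> (\<Sum>j=1..q. \<bar>y j\<bar>)"
proof (rule field_le_epsilon)
  fix e :: real assume e: "e > 0"
  define d where "d = e / real p"
  have d: "d > 0" using e p by (simp add: d_def)
  have pd: "real p * d = e" using p by (simp add: d_def)
  have dm: "real q * d \<le> e" using pd d p by (simp add: algebra_simps)
  have D: "{1..p} - {p} = {1..q}" using p by auto
  define a where "a = (\<lambda>j. if j = p then (\<Sum>j=1..q. \<bar>y j\<bar> + d) + 1 else \<bar>y j\<bar> + d)"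
  have ac: "a \<in> lorentz_cone p" unfolding a_def
  proof (rule cone_mem[OF p])
    show "0 < (\<Sum>j=1..q. \<bar>y j\<bar> + d) + 1" using d
      by (metis add_nonneg_pos abs_ge_zero add_nonneg_nonneg less_imp_le sum_nonneg zero_less_one)
  qed (use d p in auto)
  have "(\<Sum>j\<in>{1..p}-{p}. (restr ({1..p} - {p}) y j)^2 / a j + a j)
      = (\<Sum>j=1..q. (y j)^2 / (\<bar>y j\<bar> + d) + (\<bar>y j\<bar> + d))"
    unfolding D using p by (intro sum.cong) (auto simp: restr_def a_def)
  also have "\<dots> \<le> (\<Sum>j=1..q. \<bar>y j\<bar> + (\<bar>y j\<bar> + d))"
    using frac_ub[OF d] by (intro sum_mono) auto
  also have "\<dots> = 2 * (\<Sum>j=1..q. \<bar>y j\<bar>) + real q * d"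
    by (simp add: sum.distrib sum_distrib_left)
  finally have v: "(1/2) * (\<Sum>j\<in>{1..p}-{p}. (restr ({1..p} - {p}) y j)^2 / a j + a j) \<le> (\<Sum>j=1..q. \<bar>y j\<bar>) + e"
    using dm d e by linarith
  have "omega_comp p {p} (restr ({1..p} - {p}) y) \<le> (1/2) * (\<Sum>j\<in>{1..p}-{p}. (restr ({1..p} - {p}) y j)^2 / a j + a j)"
    unfolding omega_comp_def
  proof (rule cInf_lower)
    show "bdd_below ((\<lambda>a. 1 / 2 * (\<Sum>j\<in>{1..p}-{p}. (restr ({1..p} - {p}) y j)\<^sup>2 / a j + a j)) ` lorentz_cone p)"
      using sum_lb[of _ p "{1..p}-{p}" "restr ({1..p} - {p}) y"] by (intro bdd_belowI2) auto
  qed (use ac in auto)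
  with v show "omega_comp p {p} (restr ({1..p} - {p}) y) \<le> (\<Sum>j=1..q. \<bar>y j\<bar>) + e" by linarith
qed

lemma ups_ub: assumes "p \<ge> 2" shows "upsilon p {p} y \<le> (\<Sum>j=1..p. \<bar>y j\<bar>)"
proof -
  obtain q where p: "p = Suc q" and q: "q \<ge> 1" using assms by (cases p) auto
  have "(\<Sum>j=1..p. \<bar>y j\<bar>) = (\<Sum>j=1..q. \<bar>y j\<bar>) + \<bar>y p\<bar>" using p by simp
  then show ?thesis unfolding upsilon_def using lo_ub[OF p q, of y] om_ub[OF p q, of y] by linarith
qed


lemma sum_scale: fixes t :: real and y :: "nat \<Rightarrow> real" assumes "t > 0"
  shows "(\<Sum>j=1..p. \<bar>t * y j\<bar>) = t * (\<Sum>j=1..p. \<bar>y j\<bar>)"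
proof -
  have "\<bar>t\<bar> = t" using assms by simp
  then show ?thesis by (simp add: abs_mult sum_distrib_left)
qed

theorem lemma12:
  fixes p :: nat and J :: "nat set" and \<beta> :: "nat \<Rightarrow> real"
  assumes "p \<ge> 2" and "J \<subseteq> {1..p}" and "\<beta> \<in> vecs p"
  shows "gauge_g p J \<beta> = (\<Sum>j=1..p. \<bar>\<beta> j\<bar>)"
proof -
  have p1: "p \<ge> 1" using assms by simp
  define L where "L = {y\<in>vecs p. (\<Sum>j=1..p. \<bar>y j\<bar>) \<le> 1}"
  have fcL: "fconvex L" unfolding fconvex_def L_def
  proof (intro ballI allI impI)
    fix x y and u :: real assume x: "x \<in> {y \<in> vecs p. (\<Sum>j = 1..p. \<bar>y j\<bar>) \<le> 1}"
      and y: "y \<in> {y \<in> vecs p. (\<Sum>j = 1..p. \<bar>y j\<bar>) \<le> 1}" and u: "0 \<le> u \<and> u \<le> 1"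
    have "(\<Sum>j=1..p. \<bar>u * x j + (1 - u) * y j\<bar>) \<le> (\<Sum>j=1..p. u * \<bar>x j\<bar> + (1 - u) * \<bar>y j\<bar>)"
    proof (intro sum_mono)
      fix j
      have "\<bar>u * x j + (1 - u) * y j\<bar> \<le> \<bar>u * x j\<bar> + \<bar>(1 - u) * y j\<bar>" by (rule abs_triangle_ineq)
      also have "\<dots> = u * \<bar>x j\<bar> + (1 - u) * \<bar>y j\<bar>" using u by (simp add: abs_mult)
      finally show "\<bar>u * x j + (1 - u) * y j\<bar> \<le> u * \<bar>x j\<bar> + (1 - u) * \<bar>y j\<bar>" .
    qed
    also have "\<dots> = u * (\<Sum>j=1..p. \<bar>x j\<bar>) + (1 - u) * (\<Sum>j=1..p. \<bar>y j\<bar>)"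
      by (simp add: sum.distrib sum_distrib_left)
    also have "\<dots> \<le> u * 1 + (1 - u) * 1"
      using x y u by (intro add_mono mult_left_mono) auto
    finally show "(\<lambda>j. u * x j + (1 - u) * y j) \<in> {y \<in> vecs p. (\<Sum>j = 1..p. \<bar>y j\<bar>) \<le> 1}"
      using x y by (auto simp: vecs_def)
  qed
  have BL: "Bbar p \<subseteq> L"
  proof
    fix y assume "y \<in> Bbar p"
    then obtain S where "y \<in> vecs p" "upsilon p S y \<le> 1" unfolding Bbar_def by auto
    then show "y \<in> L" unfolding L_def using ups_lb[OF p1, of y S] by auto
  qed
  have fL: "flip p J ` Bbar p \<subseteq> L"
  proof
    fix z assume "z \<in> flip p J ` Bbar p"
    then obtain y where y: "y \<in> Bbar p" and z: "z = flip p J y" by auto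
    have yL: "y \<in> L" using y BL by auto
    have "(\<Sum>j=1..p. \<bar>z j\<bar>) = (\<Sum>j=1..p. \<bar>y j\<bar>)"
      unfolding z flip_def restr_def by (intro sum.cong) auto
    moreover have "z \<in> vecs p" using yL unfolding z flip_def restr_def L_def vecs_def by auto
    ultimately show "z \<in> L" using yL unfolding L_def by auto
  qed
  have BgL: "Bg p J \<subseteq> L" unfolding Bg_def
    by (rule hull_minimal) (use BL fL fcL in auto)
  have inB: "y \<in> Bg p J" if "y \<in> vecs p" "(\<Sum>j=1..p. \<bar>y j\<bar>) \<le> 1" for y
  proof -
    have al: "{p} \<in> {S. allowed p S}" unfolding allowed_def using p1 by auto
    have "y \<in> {\<beta>\<in>vecs p. upsilon p {p} \<beta> \<le> 1}"
      using that ups_ub[OF assms(1), of y] by auto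
    then have "y \<in> Bbar p" unfolding Bbar_def by (rule UN_I[OF al])
    then have "y \<in> Bbar p \<union> flip p J ` Bbar p" by (rule UnI1)
    then show ?thesis unfolding Bg_def by (rule hull_inc)
  qed
  define s where "s = (\<Sum>j=1..p. \<bar>\<beta> j\<bar>)"
  define T where "T = {t. t > 0 \<and> \<beta> \<in> (\<lambda>y j. t * y j) ` Bg p J}"
  have lb: "s \<le> t" if "t \<in> T" for t
  proof -
    from that have t: "t > 0" and "\<beta> \<in> (\<lambda>y j. t * y j) ` Bg p J" unfolding T_def by auto
    then obtain y where y: "y \<in> Bg p J" and b: "\<beta> = (\<lambda>j. t * y j)" by (elim imageE)
    have "(\<Sum>j=1..p. \<bar>y j\<bar>) \<le> 1" using y BgL unfolding L_def by auto
    then have "t * (\<Sum>j=1..p. \<bar>y j\<bar>) \<le> t" using t by simp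
    then show ?thesis unfolding s_def b using sum_scale[OF t] by simp
  qed
  have gT: "gauge_g p J \<beta> = Inf T" unfolding gauge_g_def T_def ..
  show ?thesis
  proof (cases "s > 0")
    case True
    define y where "y = (\<lambda>j. \<beta> j / s)"
    have yv: "y \<in> vecs p" using assms(3) unfolding vecs_def y_def by auto
    have "(\<Sum>j=1..p. \<bar>y j\<bar>) = (\<Sum>j=1..p. \<bar>\<beta> j\<bar>) / s"
      unfolding y_def using True by (simp add: sum_divide_distrib)
    then have "(\<Sum>j=1..p. \<bar>y j\<bar>) = 1" using True unfolding s_def by simp
    then have "y \<in> Bg p J" using inB yv by simp
    moreover have "\<beta> = (\<lambda>j. s * y j)" using True unfolding y_def by auto
    ultimately have "\<beta> \<in> (\<lambda>y j. s * y j) ` Bg p J" by (intro image_eqI)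
    then have "s \<in> T" unfolding T_def using True by simp
    then have "Inf T = s" using lb by (intro cInf_eq_minimum) auto
    then show ?thesis using gT s_def by simp
  next
    case False
    have "s \<ge> 0" unfolding s_def by (intro sum_nonneg) auto
    with False have s0: "s = 0" by linarith
    have "\<forall>j\<in>{1..p}. \<bar>\<beta> j\<bar> = 0"
      using s0 unfolding s_def by (subst sum_nonneg_eq_0_iff[symmetric]) auto
    then have b0: "\<beta> = (\<lambda>j. 0)" using assms(3) unfolding vecs_def
    proof (intro ext)
      fix j show "\<beta> j = 0"
      proof (cases "j \<in> {1..p}")
        case True then show ?thesis using \<open>\<forall>j\<in>{1..p}. \<bar>\<beta> j\<bar> = 0\<close> by simp
      next
        case False then show ?thesis using assms(3) unfolding vecs_def by simp
      qed
    qed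
    have z: "(\<lambda>j. 0::real) \<in> Bg p J" using inB by (simp add: vecs_def)
    have "T = {0<..}"
    proof (intro set_eqI iffI)
      fix t assume "t \<in> T" then show "t \<in> {0<..}" unfolding T_def by auto
    next
      fix t :: real assume "t \<in> {0<..}"
      moreover have "\<beta> = (\<lambda>j. t * (\<lambda>j. 0::real) j)" using b0 by simp
      have "\<beta> \<in> (\<lambda>y j. t * y j) ` Bg p J" using z b0 by (intro image_eqI[where x="\<lambda>j. 0"]) auto
      with \<open>t \<in> {0<..}\<close> show "t \<in> T" unfolding T_def by simp
    qed
    then show ?thesis using gT s0 s_def by simp
  qed
qed

end
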